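(* For every $n\ge 2$, $C(2w_n)=C(2v_{n+1})$, where $w_n=x_1\cdots x_n(x_1^2+1)$ and $v_{n+1}=x_1\cdots x_{n+1}(x_1+x_2)$.
   Context: All operations are on $\mathbb{Z}_8$. For an operation $f$, $C(f)$ denotes the clone generated by $f$ together with binary addition and all unary constant operations. *)

theory Defs
  imports Main "HOL-Library.Numeral_Type"
begin

text \<open>A k-ary operation is
a pair (k, h) with h :: (nat => 8) => 8 meant to depend only on the arguments
x 0, ..., x (k-1).\<close>

type_synonym op8 = "nat \<times> ((nat \<Rightarrow> 8) \<Rightarrow> 8)"

inductive_set gen_clone :: "op8 set \<Rightarrow> op8 set" for F :: "op8 set" where
  proj: "i < k \<Longrightarrow> (k, \<lambda>x. x i) \<in> gen_clone F"
| comp: "(m, f) \<in> F \<Longrightarrow> (\<forall>j<m. (k, g j) \<in> gen_clone F)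
          \<Longrightarrow> (k, \<lambda>x. f (\<lambda>j. if j < m then g j x else 0)) \<in> gen_clone F"

definition add_op :: op8 where
  "add_op = (2, \<lambda>x. x 0 + x 1)"

definition const_ops :: "op8 set" where
  "const_ops = {(1, \<lambda>x. c) | c. True}"

definition C :: "op8 \<Rightarrow> op8 set" where
  "C f = gen_clone (insert f (insert add_op const_ops))"

text \<open>w_n = x_1 ... x_n (x_1^2 + 1), n-ary (variables indexed from 0).\<close>
definition w :: "nat \<Rightarrow> (nat \<Rightarrow> 8) \<Rightarrow> 8" where
  "w n = (\<lambda>x. (\<Prod>i<n. x i) * (x 0 ^ 2 + 1))"

definition v :: "nat \<Rightarrow> (nat \<Rightarrow> 8) \<Rightarrow> 8" where
  "v m = (\<lambda>x. (\<Prod>i<m. x i) * (x 0 + x 1))"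

end

theory Submission
  imports Defs
begin

lemma clone_subst:
  assumes "(m, f) \<in> gen_clone F" "\<forall>j<m. (k, g j) \<in> gen_clone F"
  shows "(k, \<lambda>x. f (\<lambda>j. if j < m then g j x else 0)) \<in> gen_clone F"
  using assms
proof (induct m f arbitrary: g rule: gen_clone.induct)
  case (proj i m)
  then show ?case by simp
next
  case (comp m0 f0 m h)
  have "(k, \<lambda>x. f0 (\<lambda>j. if j < m0 then (\<lambda>x. h j (\<lambda>j'. if j' < m then g j' x else 0)) x else 0)) \<in> gen_clone F"
    apply (rule gen_clone.comp[OF comp.hyps(1)])
    using comp by blast
  then show ?case by simp
qed

lemma clone_mono:
  assumes "F \<subseteq> gen_clone G" "p \<in> gen_clone F"
  shows "p \<in> gen_clone G"
proof -
  obtain a b where p: "p = (a, b)" by (cases p)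
  have "(a, b) \<in> gen_clone F" using assms(2) p by simp
  then have "(a, b) \<in> gen_clone G"
  proof (induct a b rule: gen_clone.induct)
    case (proj i k)
    then show ?case by (rule gen_clone.proj)
  next
    case (comp m f k g)
    then show ?case using assms(1) by (intro clone_subst) auto
  qed
  then show ?thesis using p by simp
qed

lemma clone_app:
  assumes "(m, f) \<in> F" "\<And>x. f (\<lambda>j. if j < m then x j else 0) = f x"
    "\<forall>j<m. (k, \<lambda>x. Y x j) \<in> gen_clone F"
  shows "(k, \<lambda>x. f (Y x)) \<in> gen_clone F"
proof -
  have "(k, \<lambda>x. f (\<lambda>j. if j < m then (\<lambda>x. Y x j) x else 0)) \<in> gen_clone F"
    by (rule gen_clone.comp[OF assms(1)]) (use assms(3) in simp)
  moreover have "(\<lambda>x. f (\<lambda>j. if j < m then (\<lambda>x. Y x j) x else 0)) = (\<lambda>x. f (Y x))"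
    using assms(2)[of "Y _"] by simp
  ultimately show ?thesis by simp
qed

lemma clone_gen:
  assumes "(m, f) \<in> F" "\<And>x. f (\<lambda>j. if j < m then x j else 0) = f x"
  shows "(m, f) \<in> gen_clone F"
  using clone_app[OF assms, of m "\<lambda>x. x"] by (simp add: gen_clone.proj)

lemma clone_add:
  assumes "add_op \<in> F" "(k, f) \<in> gen_clone F" "(k, g) \<in> gen_clone F"
  shows "(k, \<lambda>x. f x + g x) \<in> gen_clone F"
proof -
  have "\<forall>j<(2::nat). (k, \<lambda>x. (if j = 0 then f x else g x)) \<in> gen_clone F"
    using assms by (auto simp: less_2_cases_iff)
  then show ?thesis
    using clone_app[of 2 "\<lambda>y. y 0 + y 1" F k "\<lambda>x (j::nat). if j = 0 then f x else g x"] assms(1)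
    by (simp add: add_op_def)
qed

lemma clone_const:
  assumes "(1, \<lambda>x. c) \<in> F" "0 < k"
  shows "(k, \<lambda>x. c) \<in> gen_clone F"
proof -
  have "(k, \<lambda>x. (\<lambda>y. c) x) \<in> gen_clone F"
    apply (rule clone_app[of 1 "\<lambda>y. c"])
    using assms by (auto intro: gen_clone.proj)
  then show ?thesis by simp
qed


lemma el8: "(x::8) \<in> {0,1,2,3,4,5,6,7}"
proof (induct x rule: bit0.induct)
  case (1 z)
  then have "z = 0 \<or> z = 1 \<or> z = 2 \<or> z = 3 \<or> z = 4 \<or> z = 5 \<or> z = 6 \<or> z = 7" by auto
  then show ?case by auto
qed


lemma base_in:
  assumes "p \<in> insert add_op const_ops"
  shows "p \<in> gen_clone (insert g (insert add_op const_ops))"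
  using assms
proof
  assume "p = add_op"
  then show ?thesis by (auto simp: add_op_def intro!: clone_gen)
next
  assume "p \<in> const_ops"
  then show ?thesis by (auto simp: const_ops_def intro!: clone_gen)
qed

lemma prod3: "(\<Prod>i<Suc (Suc (Suc m)). f i) = f 0 * f 1 * f 2 * (\<Prod>i<m. f (Suc (Suc (Suc i))))"
  for f :: "nat \<Rightarrow> 8"
  by (simp add: prod.lessThan_Suc_shift del: prod.lessThan_Suc) (simp add: algebra_simps numeral_2_eq_2)

lemma prod2: "(\<Prod>i<Suc (Suc m). f i) = f 0 * f 1 * (\<Prod>i<m. f (Suc (Suc i)))"
  for f :: "nat \<Rightarrow> 8"
  by (simp add: prod.lessThan_Suc_shift del: prod.lessThan_Suc)

lemma w_dep: "2 \<le> n \<Longrightarrow> 2 * w n (\<lambda>j. if j < n then x j else 0) = 2 * w n x"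
  unfolding w_def by (auto intro!: prod.cong)

lemma v_dep: "2 \<le> n \<Longrightarrow> 2 * v n (\<lambda>j. if j < n then x j else 0) = 2 * v n x"
  unfolding v_def by (auto intro!: prod.cong)


lemma id1: fixes a b :: 8 shows "2*a*b*(a^2+1) = 2*(b*(a+b)*(1+a))*(b+(a+b)) + 2*(b*1*1)*(b+1) + 2*(b*7*1)*(b+7)"
  using el8[of a] el8[of b] by auto

lemma id2: fixes a b c :: 8 shows "2*(a*b*c)*(a+b) = 2*(a*c)*(a^2+1) + 2*(b*c)*(b^2+1) + 2*((a+b)*c)*((a+b)^2+1)"
  using el8[of a] el8[of b] el8[of c] by auto

theorem lemma4p5:
  fixes n :: nat
  assumes "n \<ge> 2"
  shows "C (n, \<lambda>x. 2 * w n x) = C (n + 1, \<lambda>x. 2 * v (n + 1) x)"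
proof -
  obtain m where n: "n = Suc (Suc m)" using assms by (metis add_2_eq_Suc le_Suc_ex)
  have n1: "n + 1 = Suc (Suc (Suc m))" using n by simp
  define B where "B = insert add_op const_ops"
  define F1 where "F1 = insert (n, \<lambda>x. 2 * w n x) B"
  define F2 where "F2 = insert (n + 1, \<lambda>x. 2 * v (n + 1) x) B"
  have addF1: "add_op \<in> F1" and addF2: "add_op \<in> F2" by (auto simp: F1_def F2_def B_def)
  have cF1: "(1, \<lambda>x. c) \<in> F1" and cF2: "(1, \<lambda>x. c) \<in> F2" for c
    by (auto simp: F1_def F2_def B_def const_ops_def)
  define Y1 where "Y1 = (\<lambda>(x::nat \<Rightarrow> 8) i. if i = 0 then x 1 else if i = 1 then x 0 + x 1 else if i = 2 then 1 + x 0 else x (i - 1))"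
  define Y2 where "Y2 = (\<lambda>(x::nat \<Rightarrow> 8) i. if i = 0 then x 1 else if i = 1 then 1 else if i = 2 then 1 else x (i - 1))"
  define Y3 where "Y3 = (\<lambda>(x::nat \<Rightarrow> 8) i. if i = 0 then x 1 else if i = 1 then 7 else if i = 2 then 1 else x (i - 1))"
  have p0: "(n, \<lambda>x. x 0) \<in> gen_clone F2" and p1: "(n, \<lambda>x. x 1) \<in> gen_clone F2"
    using n by (auto intro: gen_clone.proj)
  have k1: "(n, \<lambda>x. 1) \<in> gen_clone F2" and k7: "(n, \<lambda>x. 7) \<in> gen_clone F2"
    using n by (auto intro!: clone_const cF2)
  have s01: "(n, \<lambda>x. x 0 + x 1) \<in> gen_clone F2" by (rule clone_add[OF addF2 p0 p1])
  have s10: "(n, \<lambda>x. 1 + x 0) \<in> gen_clone F2" by (rule clone_add[OF addF2 k1 p0])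
  have pj: "(n, \<lambda>x. x (j - 1)) \<in> gen_clone F2" if "j < n + 1" "j \<ge> 3" for j
    using that by (auto intro: gen_clone.proj)
  have vF2: "(n + 1, \<lambda>x. 2 * v (n + 1) x) \<in> F2" by (simp add: F2_def)
  have vdep: "\<And>x. 2 * v (n + 1) (\<lambda>j. if j < n + 1 then x j else 0) = 2 * v (n + 1) x"
    using n by (intro v_dep) simp
  have t1: "(n, \<lambda>x. 2 * v (n + 1) (Y1 x)) \<in> gen_clone F2"
  proof (rule clone_app[OF vF2 vdep], intro allI impI)
    fix j assume "j < n + 1"
    then show "(n, \<lambda>x. Y1 x j) \<in> gen_clone F2"
      using p1 s01 s10 pj[of j] by (cases "j = 0"; cases "j = 1"; cases "j = 2") (auto simp: Y1_def)
  qed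
  have t2: "(n, \<lambda>x. 2 * v (n + 1) (Y2 x)) \<in> gen_clone F2"
  proof (rule clone_app[OF vF2 vdep], intro allI impI)
    fix j assume "j < n + 1"
    then show "(n, \<lambda>x. Y2 x j) \<in> gen_clone F2"
      using p1 k1 pj[of j] by (cases "j = 0"; cases "j = 1"; cases "j = 2") (auto simp: Y2_def)
  qed
  have t3: "(n, \<lambda>x. 2 * v (n + 1) (Y3 x)) \<in> gen_clone F2"
  proof (rule clone_app[OF vF2 vdep], intro allI impI)
    fix j assume "j < n + 1"
    then show "(n, \<lambda>x. Y3 x j) \<in> gen_clone F2"
      using p1 k1 k7 pj[of j] by (cases "j = 0"; cases "j = 1"; cases "j = 2") (auto simp: Y3_def)
  qed
  have t123: "(n, \<lambda>x. 2 * v (n + 1) (Y1 x) + 2 * v (n + 1) (Y2 x) + 2 * v (n + 1) (Y3 x)) \<in> gen_clone F2"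
    by (rule clone_add[OF addF2 clone_add[OF addF2 t1 t2] t3])
  have eq1: "2 * v (n + 1) (Y1 x) + 2 * v (n + 1) (Y2 x) + 2 * v (n + 1) (Y3 x) = 2 * w n x" for x
  proof -
    define Q where "Q = (\<Prod>i<m. x (Suc (Suc i)))"
    have "2 * w n x = Q * (2*(x 0)*(x 1)*((x 0)^2+1))"
      unfolding w_def n prod2 Q_def by (simp add: algebra_simps)
    also have "\<dots> = Q * (2*((x 1)*((x 0)+(x 1))*(1+(x 0)))*((x 1)+((x 0)+(x 1))) + 2*((x 1)*1*1)*((x 1)+1) + 2*((x 1)*7*1)*((x 1)+7))"
      by (simp only: id1)
    also have "\<dots> = 2 * v (n + 1) (Y1 x) + 2 * v (n + 1) (Y2 x) + 2 * v (n + 1) (Y3 x)"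
      unfolding v_def n1 prod3 Q_def Y1_def Y2_def Y3_def by (simp add: algebra_simps)
    finally show ?thesis by simp
  qed
  have g1: "(n, \<lambda>x. 2 * w n x) \<in> gen_clone F2"
    using t123 eq1 by simp
  define Z1 where "Z1 = (\<lambda>(x::nat \<Rightarrow> 8) i. if i = 0 then x 0 else if i = 1 then x 2 else x (i + 1))"
  define Z2 where "Z2 = (\<lambda>(x::nat \<Rightarrow> 8) i. if i = 0 then x 1 else if i = 1 then x 2 else x (i + 1))"
  define Z3 where "Z3 = (\<lambda>(x::nat \<Rightarrow> 8) i. if i = 0 then x 0 + x 1 else if i = 1 then x 2 else x (i + 1))"
  have q0: "(n + 1, \<lambda>x. x 0) \<in> gen_clone F1" and q1: "(n + 1, \<lambda>x. x 1) \<in> gen_clone F1"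
    and q2: "(n + 1, \<lambda>x. x 2) \<in> gen_clone F1"
    using n by (auto intro: gen_clone.proj)
  have r01: "(n + 1, \<lambda>x. x 0 + x 1) \<in> gen_clone F1" by (rule clone_add[OF addF1 q0 q1])
  have qj: "(n + 1, \<lambda>x. x (j + 1)) \<in> gen_clone F1" if "j < n" for j
    using that by (auto intro: gen_clone.proj)
  have wF1: "(n, \<lambda>x. 2 * w n x) \<in> F1" by (simp add: F1_def)
  have wdep: "\<And>x. 2 * w n (\<lambda>j. if j < n then x j else 0) = 2 * w n x"
    using assms by (intro w_dep)
  have u1: "(n + 1, \<lambda>x. 2 * w n (Z1 x)) \<in> gen_clone F1"
  proof (rule clone_app[OF wF1 wdep], intro allI impI)
    fix j assume "j < n"
    then show "(n + 1, \<lambda>x. Z1 x j) \<in> gen_clone F1"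
      using q0 q2 qj[of j] by (cases "j = 0"; cases "j = 1") (auto simp: Z1_def)
  qed
  have u2: "(n + 1, \<lambda>x. 2 * w n (Z2 x)) \<in> gen_clone F1"
  proof (rule clone_app[OF wF1 wdep], intro allI impI)
    fix j assume "j < n"
    then show "(n + 1, \<lambda>x. Z2 x j) \<in> gen_clone F1"
      using q1 q2 qj[of j] by (cases "j = 0"; cases "j = 1") (auto simp: Z2_def)
  qed
  have u3: "(n + 1, \<lambda>x. 2 * w n (Z3 x)) \<in> gen_clone F1"
  proof (rule clone_app[OF wF1 wdep], intro allI impI)
    fix j assume "j < n"
    then show "(n + 1, \<lambda>x. Z3 x j) \<in> gen_clone F1"
      using r01 q2 qj[of j] by (cases "j = 0"; cases "j = 1") (auto simp: Z3_def)
  qed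
  have u123: "(n + 1, \<lambda>x. 2 * w n (Z1 x) + 2 * w n (Z2 x) + 2 * w n (Z3 x)) \<in> gen_clone F1"
    by (rule clone_add[OF addF1 clone_add[OF addF1 u1 u2] u3])
  have eq2: "2 * w n (Z1 x) + 2 * w n (Z2 x) + 2 * w n (Z3 x) = 2 * v (n + 1) x" for x
  proof -
    define Q where "Q = (\<Prod>i<m. x (Suc (Suc (Suc i))))"
    have "2 * v (n + 1) x = Q * (2*((x 0)*(x 1)*(x 2))*((x 0)+(x 1)))"
      unfolding v_def n1 prod3 Q_def by (simp add: algebra_simps)
    also have "\<dots> = Q * (2*((x 0)*(x 2))*((x 0)^2+1) + 2*((x 1)*(x 2))*((x 1)^2+1) + 2*(((x 0)+(x 1))*(x 2))*(((x 0)+(x 1))^2+1))"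
      by (simp only: id2)
    also have "\<dots> = 2 * w n (Z1 x) + 2 * w n (Z2 x) + 2 * w n (Z3 x)"
      unfolding w_def n prod2 Q_def Z1_def Z2_def Z3_def by (simp add: algebra_simps)
    finally show ?thesis by simp
  qed
  have g2: "(n + 1, \<lambda>x. 2 * v (n + 1) x) \<in> gen_clone F1"
    using u123 eq2 by simp
  have F1sub: "F1 \<subseteq> gen_clone F2"
    using g1 base_in[of _ "(n + 1, \<lambda>x. 2 * v (n + 1) x)"] by (auto simp: F1_def F2_def B_def)
  have F2sub: "F2 \<subseteq> gen_clone F1"
    using g2 base_in[of _ "(n, \<lambda>x. 2 * w n x)"] by (auto simp: F1_def F2_def B_def)
  have "gen_clone F1 = gen_clone F2"
    using clone_mono[OF F1sub] clone_mono[OF F2sub] by blast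
  then show ?thesis by (simp add: C_def F1_def F2_def B_def)
qed

end
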